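(* For any set of positions $P\subseteq\mathsf{Pos}(R)$ and any character $\alpha$: (i) $\displaystyle \delta(P,\alpha)=\bigcup_{v\in\tilde N^\odot(P,\alpha)}\delta^\odot(v,\alpha)\;\cup\;\bigcup_{v\in\tilde N^\ast(P,\alpha)}\delta^\ast(v,\alpha)$; (ii) $\delta^\odot(u,\alpha)\cap\delta^\odot(v,\alpha)=\emptyset$ for any two distinct $u,v\in\tilde N^\odot(P,\alpha)$, and $\delta^\ast(u,\alpha)\cap\delta^\ast(v,\alpha)=\emptyset$ for any two distinct $u,v\in\tilde N^\ast(P,\alpha)$; (iii) $\delta^\odot(v,\alpha)\neq\emptyset$ for every $v\in\tilde N^\odot(P,\alpha)$ and $\delta^\ast(v,\alpha)\neq\emptyset$ for every $v\in\tilde N^\ast(P,\alpha)$.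
   Context: A regular expression $R$ over $\Sigma$ (built from $\epsilon$ and characters using $\odot$, $\mid$, $\ast$) is identified with its parse tree; $\odot$- and $\mid$-nodes $v$ have children $\mathsf{left}(v),\mathsf{right}(v)$, a $\ast$-node has one child. Positions $\mathsf{Pos}(R)$ are the character-labeled leaves, $\mathsf{Pos}_\alpha$ those labeled $\alpha$. For a node $v$, $\mathsf{first}(v)$, $\mathsf{last}(v)$ are the sets of positions occurring first/last in a sequence of positions generated by the subexpression rooted at $v$ (leaves treated as distinct symbols); $\mathsf{follow}(R,p)$ is the set of positions that can immediately follow $p$ in a sequence generated by $R$. $\mathsf{firstextent}(p)=\{v: p\in\mathsf{first}(v)\}$, $\mathsf{lastextent}(p)=\{v:p\in\mathsf{last}(v)\}$, and for a set $X$ of positions $\mathsf{firstextent}(X)=\bigcup_{p\in X}\mathsf{firstextent}(p)$, similarly $\mathsf{lastextent}(X)$. State-set transition (ignoring the start state): $\delta(P,\alpha)=\{q\in\mathsf{Pos}_\alpha : q\in\mathsf{follow}(R,p)\text{ for some }p\in P\}$. $\mathsf{lca}$ denotes lowest common ancestor; $\mathsf{lca}(P,\mathsf{Pos}_\alpha)=\{\mathsf{lca}(p,q):p\in P,q\in\mathsf{Pos}_\alpha\}$. $\mathsf{parent}^\ast(v)$ is the lowest ancestor of $v$ (including $v$ itself) that is a $\ast$-node, extended to sets elementwise. Internal transitions: for a $\odot$-node $v$, $\delta^\odot(v,\alpha)=\{q\in\mathsf{Pos}_\alpha:\mathsf{right}(v)\in\mathsf{firstextent}(q)\}$; for a node $v$,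 $\delta^\ast(v,\alpha)=\{q\in\mathsf{Pos}_\alpha:\mathsf{parent}^\ast(v)\in\mathsf{firstextent}(q)\}$. Transition nodes: $N^\odot(P,\alpha)$ is the set of $\odot$-nodes $v$ with $\mathsf{left}(v)\in\mathsf{lastextent}(P)$ and $\mathsf{right}(v)\in\mathsf{firstextent}(\mathsf{Pos}_\alpha)$; $N^\ast(P,\alpha)$ is the set of $\ast$-nodes in $\mathsf{parent}^\ast(\mathsf{lca}(P,\mathsf{Pos}_\alpha))\cap\mathsf{lastextent}(P)\cap\mathsf{firstextent}(\mathsf{Pos}_\alpha)$. A node $v$ is $\ast$-dominated by $u$ if $u$ is a proper ancestor of $v$ and $\mathsf{first}(v)\subseteq\mathsf{first}(u)$; $\tilde N^\ast(P,\alpha)$ is the set of $v\in N^\ast(P,\alpha)$ not $\ast$-dominated by any node of $N^\ast(P,\alpha)$. A node $v$ is $\odot$-dominated by $u$ if $u$ is a proper ancestor of $v$ and $\mathsf{first}(\mathsf{right}(v))\subseteq\mathsf{first}(\mathsf{right}(u))$; $\tilde N^\odot(P,\alpha)$ is the set of $v\in N^\odot(P,\alpha)$ not $\odot$-dominated by any node of $N^\odot(P,\alpha)$. *)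

theory Defs
  imports Main "HOL-Library.Sublist"
begin

text \<open>Regular expressions, identified with their parse trees.
  Nodes of the parse tree of R are addressed by paths (nat lists) from the root:
  0 = left child (or the unique child of a star node), 1 = right child.\<close>

datatype 'a re = Eps | Chr 'a | Cat "'a re" "'a re" | Alt "'a re" "'a re" | Star "'a re"

fun node_at :: "'a re \<Rightarrow> nat list \<Rightarrow> 'a re option" where
  "node_at r [] = Some r"
| "node_at (Cat r s) (0 # p) = node_at r p"
| "node_at (Cat r s) (Suc 0 # p) = node_at s p"
| "node_at (Alt r s) (0 # p) = node_at r p"
| "node_at (Alt r s) (Suc 0 # p) = node_at s p"
| "node_at (Star r) (0 # p) = node_at r p"
| "node_at _ _ = None"

definition nodes :: "'a re \<Rightarrow> nat list set" where
  "nodes R = {v. node_at R v \<noteq> None}"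

definition left :: "nat list \<Rightarrow> nat list" where "left v = v @ [0]"
definition right :: "nat list \<Rightarrow> nat list" where "right v = v @ [1]"

definition is_cat :: "'a re \<Rightarrow> nat list \<Rightarrow> bool" where
  "is_cat R v \<longleftrightarrow> (\<exists>r s. node_at R v = Some (Cat r s))"

definition is_star :: "'a re \<Rightarrow> nat list \<Rightarrow> bool" where
  "is_star R v \<longleftrightarrow> (\<exists>r. node_at R v = Some (Star r))"

definition Pos :: "'a re \<Rightarrow> nat list set" where
  "Pos R = {p. \<exists>a. node_at R p = Some (Chr a)}"

definition Pos_chr :: "'a re \<Rightarrow> 'a \<Rightarrow> nat list set" where
  "Pos_chr R a = {p. node_at R p = Some (Chr a)}"

text \<open>Sequences of positions (relative paths of leaves) generated by an expression,
  leaves being treated as distinct symbols.\<close>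
fun plang :: "'a re \<Rightarrow> nat list list set" where
  "plang Eps = {[]}"
| "plang (Chr a) = {[[]]}"
| "plang (Cat r s) = {map ((#) 0) u @ map ((#) 1) w | u w. u \<in> plang r \<and> w \<in> plang s}"
| "plang (Alt r s) = map ((#) 0) ` plang r \<union> map ((#) 1) ` plang s"
| "plang (Star r) = {concat ws | ws. \<forall>w\<in>set ws. w \<in> map ((#) 0) ` plang r}"

definition first :: "'a re \<Rightarrow> nat list \<Rightarrow> nat list set" where
  "first R v = {v @ hd w | w r. node_at R v = Some r \<and> w \<in> plang r \<and> w \<noteq> []}"

definition last :: "'a re \<Rightarrow> nat list \<Rightarrow> nat list set" where
  "last R v = {v @ List.last w | w r. node_at R v = Some r \<and> w \<in> plang r \<and> w \<noteq> []}"

definition follow :: "'a re \<Rightarrow> nat list \<Rightarrow> nat list set" where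
  "follow R p = {q. \<exists>u w. u @ [p, q] @ w \<in> plang R}"

definition firstextent :: "'a re \<Rightarrow> nat list set \<Rightarrow> nat list set" where
  "firstextent R X = {v \<in> nodes R. \<exists>p\<in>X. p \<in> first R v}"

definition lastextent :: "'a re \<Rightarrow> nat list set \<Rightarrow> nat list set" where
  "lastextent R X = {v \<in> nodes R. \<exists>p\<in>X. p \<in> last R v}"

definition delta :: "'a re \<Rightarrow> nat list set \<Rightarrow> 'a \<Rightarrow> nat list set" where
  "delta R P a = {q \<in> Pos_chr R a. \<exists>p\<in>P. q \<in> follow R p}"

text \<open>Lowest common ancestor = longest common prefix of the paths.\<close>
fun lcp :: "nat list \<Rightarrow> nat list \<Rightarrow> nat list" where
  "lcp (x # xs) (y # ys) = (if x = y then x # lcp xs ys else [])"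
| "lcp _ _ = []"

definition lca_set :: "nat list set \<Rightarrow> nat list set \<Rightarrow> nat list set" where
  "lca_set P Q = {lcp p q | p q. p \<in> P \<and> q \<in> Q}"

text \<open>parent* v: the lowest ancestor of v (including v) that is a star node;
  as a set (empty if no such ancestor exists), extended elementwise to sets.\<close>
definition pstar :: "'a re \<Rightarrow> nat list \<Rightarrow> nat list set" where
  "pstar R v = {u. prefix u v \<and> is_star R u \<and> (\<forall>w. prefix w v \<and> is_star R w \<longrightarrow> prefix w u)}"

definition pstar_set :: "'a re \<Rightarrow> nat list set \<Rightarrow> nat list set" where
  "pstar_set R V = (\<Union>v\<in>V. pstar R v)"

definition delta_cat :: "'a re \<Rightarrow> nat list \<Rightarrow> 'a \<Rightarrow> nat list set" where
  "delta_cat R v a = {q \<in> Pos_chr R a. right v \<in> firstextent R {q}}"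

definition delta_star :: "'a re \<Rightarrow> nat list \<Rightarrow> 'a \<Rightarrow> nat list set" where
  "delta_star R v a = {q \<in> Pos_chr R a. \<exists>u\<in>pstar R v. u \<in> firstextent R {q}}"

definition Ncat :: "'a re \<Rightarrow> nat list set \<Rightarrow> 'a \<Rightarrow> nat list set" where
  "Ncat R P a = {v. is_cat R v \<and> left v \<in> lastextent R P \<and> right v \<in> firstextent R (Pos_chr R a)}"

definition Nstar :: "'a re \<Rightarrow> nat list set \<Rightarrow> 'a \<Rightarrow> nat list set" where
  "Nstar R P a = {v. is_star R v \<and> v \<in> pstar_set R (lca_set P (Pos_chr R a))
                      \<and> v \<in> lastextent R P \<and> v \<in> firstextent R (Pos_chr R a)}"

definition star_dominated :: "'a re \<Rightarrow> nat list \<Rightarrow> nat list \<Rightarrow> bool" where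
  "star_dominated R v u \<longleftrightarrow> strict_prefix u v \<and> first R v \<subseteq> first R u"

definition cat_dominated :: "'a re \<Rightarrow> nat list \<Rightarrow> nat list \<Rightarrow> bool" where
  "cat_dominated R v u \<longleftrightarrow> strict_prefix u v \<and> first R (right v) \<subseteq> first R (right u)"

definition Nstar_min :: "'a re \<Rightarrow> nat list set \<Rightarrow> 'a \<Rightarrow> nat list set" where
  "Nstar_min R P a = {v \<in> Nstar R P a. \<not> (\<exists>u\<in>Nstar R P a. star_dominated R v u)}"

definition Ncat_min :: "'a re \<Rightarrow> nat list set \<Rightarrow> 'a \<Rightarrow> nat list set" where
  "Ncat_min R P a = {v \<in> Ncat R P a. \<not> (\<exists>u\<in>Ncat R P a. cat_dominated R v u)}"

end

theory Submission
  imports Defs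
begin

definition firsts :: "'a re \<Rightarrow> nat list set" where
  "firsts r = {hd w | w. w \<in> plang r \<and> w \<noteq> []}"
definition lasts :: "'a re \<Rightarrow> nat list set" where
  "lasts r = {List.last w | w. w \<in> plang r \<and> w \<noteq> []}"

lemma plang_StarI: "(\<forall>z\<in>set ws. z \<in> map ((#) 0) ` plang a) \<Longrightarrow> concat ws \<in> plang (Star a)"
  by auto
lemma plang_CatI: "u \<in> plang a \<Longrightarrow> w \<in> plang b \<Longrightarrow> map ((#) 0) u @ map ((#) 1) w \<in> plang (Cat a b)"
  by auto

lemma plang_ne: "\<exists>w. w \<in> plang r"
proof (induction r)
  case (Star r)
  have "concat [] \<in> plang (Star r)" by (rule plang_StarI) simp
  then show ?case by blast
qed auto

lemma node_at_append:
  "node_at R (v @ w) = (case node_at R v of None \<Rightarrow> None | Some s \<Rightarrow> node_at s w)"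
proof (induction v arbitrary: R)
  case Nil thus ?case by simp
next
  case (Cons i v)
  show ?case
    by (cases R; cases i; cases "i - 1"; simp add: Cons)
qed

lemma node_at_Cons_ne:
  "node_at r (i # v) = Some s \<Longrightarrow>
   (\<exists>a b. r = Cat a b \<and> (i = 0 \<and> node_at a v = Some s \<or> i = 1 \<and> node_at b v = Some s))
 \<or> (\<exists>a b. r = Alt a b \<and> (i = 0 \<and> node_at a v = Some s \<or> i = 1 \<and> node_at b v = Some s))
 \<or> (\<exists>a. r = Star a \<and> i = 0 \<and> node_at a v = Some s)"
  by (cases r; cases i; cases "i - 1"; auto)


lemma hd_concat_star:
  "(\<forall>z\<in>set ws. z \<in> map ((#) 0) ` plang a) \<Longrightarrow> concat ws \<noteq> [] \<Longrightarrow>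
   \<exists>y. hd (concat ws) = 0 # y \<and> y \<in> firsts a"
proof (induction ws)
  case Nil thus ?case by simp
next
  case (Cons z ws)
  then obtain u where u: "z = map ((#) 0) u" "u \<in> plang a" by auto
  show ?case
  proof (cases "z = []")
    case True thus ?thesis using Cons by simp
  next
    case False
    then have "u \<noteq> []" using u by auto
    then have "hd (concat (z # ws)) = 0 # hd u" "hd u \<in> firsts a"
      using u unfolding firsts_def by (auto simp: hd_map)
    then show ?thesis by blast
  qed
qed

lemma last_concat_star:
  "(\<forall>z\<in>set ws. z \<in> map ((#) 0) ` plang a) \<Longrightarrow> concat ws \<noteq> [] \<Longrightarrow>
   \<exists>y. List.last (concat ws) = 0 # y \<and> y \<in> lasts a"
proof (induction ws)
  case Nil thus ?case by simp
next
  case (Cons z ws)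
  then obtain u where u: "z = map ((#) 0) u" "u \<in> plang a" by auto
  show ?case
  proof (cases "concat ws = []")
    case False thus ?thesis using Cons by simp
  next
    case True
    then have "z \<noteq> []" using Cons by simp
    then have "u \<noteq> []" using u by auto
    then have "List.last (concat (z # ws)) = 0 # List.last u" "List.last u \<in> lasts a"
      using u True unfolding lasts_def by (auto simp: last_map)
    then show ?thesis by blast
  qed
qed

lemma firstsI: "w \<in> plang r \<Longrightarrow> w \<noteq> [] \<Longrightarrow> hd w \<in> firsts r"
  unfolding firsts_def by blast
lemma lastsI: "w \<in> plang r \<Longrightarrow> w \<noteq> [] \<Longrightarrow> List.last w \<in> lasts r"
  unfolding lasts_def by blast
lemma firstsE: "x \<in> firsts r \<Longrightarrow> (\<And>w. w \<in> plang r \<Longrightarrow> w \<noteq> [] \<Longrightarrow> x = hd w \<Longrightarrow> P) \<Longrightarrow> P"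
  unfolding firsts_def by blast
lemma lastsE: "x \<in> lasts r \<Longrightarrow> (\<And>w. w \<in> plang r \<Longrightarrow> w \<noteq> [] \<Longrightarrow> x = List.last w \<Longrightarrow> P) \<Longrightarrow> P"
  unfolding lasts_def by blast

lemma plang_CatE: "z \<in> plang (Cat a b) \<Longrightarrow> (\<And>u w. u \<in> plang a \<Longrightarrow> w \<in> plang b \<Longrightarrow> z = map ((#) 0) u @ map ((#) 1) w \<Longrightarrow> P) \<Longrightarrow> P"
  by auto
lemma plang_StarE: "z \<in> plang (Star a) \<Longrightarrow> (\<And>ws. \<forall>z\<in>set ws. z \<in> map ((#) 0) ` plang a \<Longrightarrow> z = concat ws \<Longrightarrow> P) \<Longrightarrow> P"
  by auto

lemma firsts_Cat:
  "x \<in> firsts (Cat a b) \<longleftrightarrow> (\<exists>y. x = 0 # y \<and> y \<in> firsts a) \<or> ([] \<in> plang a \<and> (\<exists>y. x = 1 # y \<and> y \<in> firsts b))"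
proof
  assume "x \<in> firsts (Cat a b)"
  then obtain z where z: "z \<in> plang (Cat a b)" "z \<noteq> []" "x = hd z" by (rule firstsE)
  obtain u w where uw: "u \<in> plang a" "w \<in> plang b" "z = map ((#) 0) u @ map ((#) 1) w"
    using z(1) by (rule plang_CatE)
  show "(\<exists>y. x = 0 # y \<and> y \<in> firsts a) \<or> ([] \<in> plang a \<and> (\<exists>y. x = 1 # y \<and> y \<in> firsts b))"
  proof (cases "u = []")
    case False
    then have "x = 0 # hd u" "hd u \<in> firsts a" using uw z by (auto simp: hd_map intro: firstsI)
    then show ?thesis by blast
  next
    case True
    then have "w \<noteq> []" using uw z by auto
    then have "x = 1 # hd w" "hd w \<in> firsts b" "[] \<in> plang a" using uw z True by (auto simp: hd_map intro: firstsI)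
    then show ?thesis by blast
  qed
next
  assume H: "(\<exists>y. x = 0 # y \<and> y \<in> firsts a) \<or> ([] \<in> plang a \<and> (\<exists>y. x = 1 # y \<and> y \<in> firsts b))"
  obtain wb where wb: "wb \<in> plang b" using plang_ne by blast
  from H show "x \<in> firsts (Cat a b)"
  proof
    assume "\<exists>y. x = 0 # y \<and> y \<in> firsts a"
    then obtain u where u: "u \<in> plang a" "u \<noteq> []" "x = 0 # hd u" unfolding firsts_def by auto
    have "hd (map ((#) 0) u @ map ((#) 1) wb) \<in> firsts (Cat a b)"
      by (rule firstsI) (use plang_CatI wb u in auto)
    then show ?thesis using u by (simp add: hd_map)
  next
    assume "[] \<in> plang a \<and> (\<exists>y. x = 1 # y \<and> y \<in> firsts b)"
    then obtain u where u: "[] \<in> plang a" "u \<in> plang b" "u \<noteq> []" "x = 1 # hd u" unfolding firsts_def by auto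
    have "hd (map ((#) 0) [] @ map ((#) 1) u) \<in> firsts (Cat a b)"
      by (rule firstsI) (use plang_CatI u in auto)
    then show ?thesis using u by (simp add: hd_map)
  qed
qed

lemma lasts_Cat:
  "x \<in> lasts (Cat a b) \<longleftrightarrow> (\<exists>y. x = 1 # y \<and> y \<in> lasts b) \<or> ([] \<in> plang b \<and> (\<exists>y. x = 0 # y \<and> y \<in> lasts a))"
proof
  assume "x \<in> lasts (Cat a b)"
  then obtain z where z: "z \<in> plang (Cat a b)" "z \<noteq> []" "x = List.last z" by (rule lastsE)
  obtain u w where uw: "u \<in> plang a" "w \<in> plang b" "z = map ((#) 0) u @ map ((#) 1) w"
    using z(1) by (rule plang_CatE)
  show "(\<exists>y. x = 1 # y \<and> y \<in> lasts b) \<or> ([] \<in> plang b \<and> (\<exists>y. x = 0 # y \<and> y \<in> lasts a))"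
  proof (cases "w = []")
    case False
    then have "x = 1 # List.last w" "List.last w \<in> lasts b" using uw z by (auto simp: last_map intro: lastsI)
    then show ?thesis by blast
  next
    case True
    then have "u \<noteq> []" using uw z by auto
    then have "x = 0 # List.last u" "List.last u \<in> lasts a" "[] \<in> plang b" using uw z True by (auto simp: last_map intro: lastsI)
    then show ?thesis by blast
  qed
next
  assume H: "(\<exists>y. x = 1 # y \<and> y \<in> lasts b) \<or> ([] \<in> plang b \<and> (\<exists>y. x = 0 # y \<and> y \<in> lasts a))"
  obtain wa where wa: "wa \<in> plang a" using plang_ne by blast
  from H show "x \<in> lasts (Cat a b)"
  proof
    assume "\<exists>y. x = 1 # y \<and> y \<in> lasts b"
    then obtain u where u: "u \<in> plang b" "u \<noteq> []" "x = 1 # List.last u" unfolding lasts_def by auto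
    have "List.last (map ((#) 0) wa @ map ((#) 1) u) \<in> lasts (Cat a b)"
      by (rule lastsI) (use plang_CatI wa u in auto)
    then show ?thesis using u by (simp add: last_map)
  next
    assume "[] \<in> plang b \<and> (\<exists>y. x = 0 # y \<and> y \<in> lasts a)"
    then obtain u where u: "[] \<in> plang b" "u \<in> plang a" "u \<noteq> []" "x = 0 # List.last u" unfolding lasts_def by auto
    have "List.last (map ((#) 0) u @ map ((#) 1) []) \<in> lasts (Cat a b)"
      by (rule lastsI) (use plang_CatI u in auto)
    then show ?thesis using u by (simp add: last_map)
  qed
qed

lemma firsts_Alt: "x \<in> firsts (Alt a b) \<longleftrightarrow> (\<exists>y. x = 0 # y \<and> y \<in> firsts a) \<or> (\<exists>y. x = 1 # y \<and> y \<in> firsts b)"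
proof
  assume "x \<in> firsts (Alt a b)"
  then obtain z where z: "z \<in> plang (Alt a b)" "z \<noteq> []" "x = hd z" by (rule firstsE)
  then show "(\<exists>y. x = 0 # y \<and> y \<in> firsts a) \<or> (\<exists>y. x = 1 # y \<and> y \<in> firsts b)"
    by (auto simp: hd_map intro: firstsI)
next
  assume "(\<exists>y. x = 0 # y \<and> y \<in> firsts a) \<or> (\<exists>y. x = 1 # y \<and> y \<in> firsts b)"
  then show "x \<in> firsts (Alt a b)"
  proof (elim disjE exE conjE firstsE)
    fix y w assume "x = 0 # y" "w \<in> plang a" "w \<noteq> []" "y = hd w"
    then show ?thesis using firstsI[of "map ((#) 0) w" "Alt a b"] by (simp add: hd_map)
  next
    fix y w assume "x = 1 # y" "w \<in> plang b" "w \<noteq> []" "y = hd w"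
    then show ?thesis using firstsI[of "map ((#) 1) w" "Alt a b"] by (simp add: hd_map)
  qed
qed

lemma lasts_Alt: "x \<in> lasts (Alt a b) \<longleftrightarrow> (\<exists>y. x = 0 # y \<and> y \<in> lasts a) \<or> (\<exists>y. x = 1 # y \<and> y \<in> lasts b)"
proof
  assume "x \<in> lasts (Alt a b)"
  then obtain z where z: "z \<in> plang (Alt a b)" "z \<noteq> []" "x = List.last z" by (rule lastsE)
  then show "(\<exists>y. x = 0 # y \<and> y \<in> lasts a) \<or> (\<exists>y. x = 1 # y \<and> y \<in> lasts b)"
    by (auto simp: last_map intro: lastsI)
next
  assume "(\<exists>y. x = 0 # y \<and> y \<in> lasts a) \<or> (\<exists>y. x = 1 # y \<and> y \<in> lasts b)"
  then show "x \<in> lasts (Alt a b)"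
  proof (elim disjE exE conjE lastsE)
    fix y w assume "x = 0 # y" "w \<in> plang a" "w \<noteq> []" "y = List.last w"
    then show ?thesis using lastsI[of "map ((#) 0) w" "Alt a b"] by (simp add: last_map)
  next
    fix y w assume "x = 1 # y" "w \<in> plang b" "w \<noteq> []" "y = List.last w"
    then show ?thesis using lastsI[of "map ((#) 1) w" "Alt a b"] by (simp add: last_map)
  qed
qed

lemma firsts_Star: "x \<in> firsts (Star a) \<longleftrightarrow> (\<exists>y. x = 0 # y \<and> y \<in> firsts a)"
proof
  assume "x \<in> firsts (Star a)"
  then obtain z where z: "z \<in> plang (Star a)" "z \<noteq> []" "x = hd z" by (rule firstsE)
  obtain ws where "\<forall>z\<in>set ws. z \<in> map ((#) 0) ` plang a" "z = concat ws" using z(1) by (rule plang_StarE)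
  then show "\<exists>y. x = 0 # y \<and> y \<in> firsts a" using hd_concat_star z by blast
next
  assume "\<exists>y. x = 0 # y \<and> y \<in> firsts a"
  then obtain u where u: "u \<in> plang a" "u \<noteq> []" "x = 0 # hd u" unfolding firsts_def by auto
  have "hd (concat [map ((#) 0) u]) \<in> firsts (Star a)"
    by (rule firstsI) (use u plang_StarI[of "[map ((#) 0) u]" a] in auto)
  then show "x \<in> firsts (Star a)" using u by (simp add: hd_map)
qed

lemma lasts_Star: "x \<in> lasts (Star a) \<longleftrightarrow> (\<exists>y. x = 0 # y \<and> y \<in> lasts a)"
proof
  assume "x \<in> lasts (Star a)"
  then obtain z where z: "z \<in> plang (Star a)" "z \<noteq> []" "x = List.last z" by (rule lastsE)
  obtain ws where "\<forall>z\<in>set ws. z \<in> map ((#) 0) ` plang a" "z = concat ws" using z(1) by (rule plang_StarE)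
  then show "\<exists>y. x = 0 # y \<and> y \<in> lasts a" using last_concat_star z by blast
next
  assume "\<exists>y. x = 0 # y \<and> y \<in> lasts a"
  then obtain u where u: "u \<in> plang a" "u \<noteq> []" "x = 0 # List.last u" unfolding lasts_def by auto
  have "List.last (concat [map ((#) 0) u]) \<in> lasts (Star a)"
    by (rule lastsI) (use u plang_StarI[of "[map ((#) 0) u]" a] in auto)
  then show "x \<in> lasts (Star a)" using u by (simp add: last_map)
qed

lemma firsts_Eps: "firsts Eps = {}" and lasts_Eps: "lasts Eps = {}"
  unfolding firsts_def lasts_def by auto
lemma firsts_Chr: "firsts (Chr c) = {[]}" and lasts_Chr: "lasts (Chr c) = {[]}"
  unfolding firsts_def lasts_def by auto


lemma firsts_down:
  "v @ x \<in> firsts s \<Longrightarrow> \<exists>s'. node_at s v = Some s' \<and> x \<in> firsts s'"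
proof (induction s arbitrary: v)
  case Eps thus ?case by (simp add: firsts_Eps)
next
  case (Chr c) thus ?case by (simp add: firsts_Chr)
next
  case (Cat a b) show ?case
  proof (cases v)
    case Nil thus ?thesis using Cat.prems by simp
  next
    case (Cons i v')
    from Cat.prems[unfolded Cons] have "(i = 0 \<and> v' @ x \<in> firsts a) \<or> (i = 1 \<and> v' @ x \<in> firsts b)"
      by (auto simp: firsts_Cat)
    then show ?thesis using Cat.IH Cons by auto
  qed
next
  case (Alt a b) show ?case
  proof (cases v)
    case Nil thus ?thesis using Alt.prems by simp
  next
    case (Cons i v')
    from Alt.prems[unfolded Cons] have "(i = 0 \<and> v' @ x \<in> firsts a) \<or> (i = 1 \<and> v' @ x \<in> firsts b)"
      by (auto simp: firsts_Alt)
    then show ?thesis using Alt.IH Cons by auto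
  qed
next
  case (Star a) show ?case
  proof (cases v)
    case Nil thus ?thesis using Star.prems by simp
  next
    case (Cons i v')
    from Star.prems[unfolded Cons] have "i = 0 \<and> v' @ x \<in> firsts a"
      by (auto simp: firsts_Star)
    then show ?thesis using Star.IH Cons by auto
  qed
qed

lemma lasts_down:
  "v @ x \<in> lasts s \<Longrightarrow> \<exists>s'. node_at s v = Some s' \<and> x \<in> lasts s'"
proof (induction s arbitrary: v)
  case Eps thus ?case by (simp add: lasts_Eps)
next
  case (Chr c) thus ?case by (simp add: lasts_Chr)
next
  case (Cat a b) show ?case
  proof (cases v)
    case Nil thus ?thesis using Cat.prems by simp
  next
    case (Cons i v')
    from Cat.prems[unfolded Cons] have "(i = 0 \<and> v' @ x \<in> lasts a) \<or> (i = 1 \<and> v' @ x \<in> lasts b)"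
      by (auto simp: lasts_Cat)
    then show ?thesis using Cat.IH Cons by auto
  qed
next
  case (Alt a b) show ?case
  proof (cases v)
    case Nil thus ?thesis using Alt.prems by simp
  next
    case (Cons i v')
    from Alt.prems[unfolded Cons] have "(i = 0 \<and> v' @ x \<in> lasts a) \<or> (i = 1 \<and> v' @ x \<in> lasts b)"
      by (auto simp: lasts_Alt)
    then show ?thesis using Alt.IH Cons by auto
  qed
next
  case (Star a) show ?case
  proof (cases v)
    case Nil thus ?thesis using Star.prems by simp
  next
    case (Cons i v')
    from Star.prems[unfolded Cons] have "i = 0 \<and> v' @ x \<in> lasts a"
      by (auto simp: lasts_Star)
    then show ?thesis using Star.IH Cons by auto
  qed
qed

lemma firsts_up:
  "node_at s v = Some s' \<Longrightarrow> v @ x \<in> firsts s \<Longrightarrow> y \<in> firsts s' \<Longrightarrow> v @ y \<in> firsts s"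
proof (induction s arbitrary: v)
  case Eps thus ?case by (cases v) auto
next
  case (Chr c) thus ?case by (cases v) auto
next
  case (Cat a b) show ?case
  proof (cases v)
    case Nil thus ?thesis using Cat.prems by simp
  next
    case (Cons i v')
    from Cat.prems(1) Cons have "(i = 0 \<and> node_at a v' = Some s') \<or> (i = 1 \<and> node_at b v' = Some s')"
      by (cases i; cases "i - 1"; auto)
    then show ?thesis
    proof
      assume h: "i = 0 \<and> node_at a v' = Some s'"
      then have "v' @ x \<in> firsts a" using Cat.prems(2) Cons by (auto simp: firsts_Cat)
      then have "v' @ y \<in> firsts a" using Cat.IH(1) h Cat.prems(3) by blast
      then show ?thesis using h Cons by (auto simp: firsts_Cat)
    next
      assume h: "i = 1 \<and> node_at b v' = Some s'"
      then have "v' @ x \<in> firsts b" "[] \<in> plang a" using Cat.prems(2) Cons by (auto simp: firsts_Cat)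
      then have "v' @ y \<in> firsts b" "[] \<in> plang a" using Cat.IH(2) h Cat.prems(3) by blast+
      then show ?thesis using h Cons by (auto simp: firsts_Cat)
    qed
  qed
next
  case (Alt a b) show ?case
  proof (cases v)
    case Nil thus ?thesis using Alt.prems by simp
  next
    case (Cons i v')
    from Alt.prems(1) Cons have "(i = 0 \<and> node_at a v' = Some s') \<or> (i = 1 \<and> node_at b v' = Some s')"
      by (cases i; cases "i - 1"; auto)
    then show ?thesis
    proof
      assume h: "i = 0 \<and> node_at a v' = Some s'"
      then have "v' @ x \<in> firsts a" using Alt.prems(2) Cons by (auto simp: firsts_Alt)
      then have "v' @ y \<in> firsts a" using Alt.IH(1) h Alt.prems(3) by blast
      then show ?thesis using h Cons by (auto simp: firsts_Alt)
    next
      assume h: "i = 1 \<and> node_at b v' = Some s'"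
      then have "v' @ x \<in> firsts b" using Alt.prems(2) Cons by (auto simp: firsts_Alt)
      then have "v' @ y \<in> firsts b" using Alt.IH(2) h Alt.prems(3) by blast
      then show ?thesis using h Cons by (auto simp: firsts_Alt)
    qed
  qed
next
  case (Star a) show ?case
  proof (cases v)
    case Nil thus ?thesis using Star.prems by simp
  next
    case (Cons i v')
    from Star.prems(1) Cons have h: "i = 0 \<and> node_at a v' = Some s'"
      by (cases i; auto)
    then have "v' @ x \<in> firsts a" using Star.prems(2) Cons by (auto simp: firsts_Star)
    then have "v' @ y \<in> firsts a" using Star.IH h Star.prems(3) by blast
    then show ?thesis using h Cons by (auto simp: firsts_Star)
  qed
qed


lemma plang_AltI1: "u \<in> plang a \<Longrightarrow> map ((#) 0) u \<in> plang (Alt a b)" by simp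
lemma plang_AltI2: "u \<in> plang b \<Longrightarrow> map ((#) 1) u \<in> plang (Alt a b)" by simp

lemma context_word:
  "node_at r v = Some s \<Longrightarrow> z \<in> plang s \<Longrightarrow> \<exists>x y. x @ map ((@) v) z @ y \<in> plang r"
proof (induction r arbitrary: v)
  case Eps thus ?case by (cases v) (auto intro!: exI[of _ "[]"])
next
  case (Chr c) thus ?case by (cases v) (auto intro!: exI[of _ "[]"])
next
  case (Cat a b) show ?case
  proof (cases v)
    case Nil thus ?thesis using Cat.prems by (auto intro!: exI[of _ "[]"])
  next
    case (Cons i v')
    from Cat.prems(1) Cons have "(i = 0 \<and> node_at a v' = Some s) \<or> (i = 1 \<and> node_at b v' = Some s)"
      by (cases i; cases "i - 1"; auto)
    then show ?thesis
    proof
      assume h: "i = 0 \<and> node_at a v' = Some s"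
      then obtain x y where xy: "x @ map ((@) v') z @ y \<in> plang a" using Cat.IH(1) Cat.prems(2) by blast
      obtain wb where wb: "wb \<in> plang b" using plang_ne by blast
      have "map ((#) 0) (x @ map ((@) v') z @ y) @ map ((#) 1) wb \<in> plang (Cat a b)"
        by (rule plang_CatI[OF xy wb])
      moreover have "map ((#) 0) (x @ map ((@) v') z @ y) @ map ((#) 1) wb
          = map ((#) 0) x @ map ((@) v) z @ (map ((#) 0) y @ map ((#) 1) wb)"
        using h Cons by simp
      ultimately show ?thesis by metis
    next
      assume h: "i = 1 \<and> node_at b v' = Some s"
      then obtain x y where xy: "x @ map ((@) v') z @ y \<in> plang b" using Cat.IH(2) Cat.prems(2) by blast
      obtain wa where wa: "wa \<in> plang a" using plang_ne by blast
      have "map ((#) 0) wa @ map ((#) 1) (x @ map ((@) v') z @ y) \<in> plang (Cat a b)"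
        by (rule plang_CatI[OF wa xy])
      moreover have "map ((#) 0) wa @ map ((#) 1) (x @ map ((@) v') z @ y)
          = (map ((#) 0) wa @ map ((#) 1) x) @ map ((@) v) z @ map ((#) 1) y"
        using h Cons by simp
      ultimately show ?thesis by metis
    qed
  qed
next
  case (Alt a b) show ?case
  proof (cases v)
    case Nil thus ?thesis using Alt.prems by (auto intro!: exI[of _ "[]"])
  next
    case (Cons i v')
    from Alt.prems(1) Cons have "(i = 0 \<and> node_at a v' = Some s) \<or> (i = 1 \<and> node_at b v' = Some s)"
      by (cases i; cases "i - 1"; auto)
    then show ?thesis
    proof
      assume h: "i = 0 \<and> node_at a v' = Some s"
      then obtain x y where xy: "x @ map ((@) v') z @ y \<in> plang a" using Alt.IH(1) Alt.prems(2) by blast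
      have "map ((#) 0) (x @ map ((@) v') z @ y) \<in> plang (Alt a b)"
        by (rule plang_AltI1[OF xy])
      moreover have "map ((#) 0) (x @ map ((@) v') z @ y)
          = map ((#) 0) x @ map ((@) v) z @ map ((#) 0) y"
        using h Cons by simp
      ultimately show ?thesis by metis
    next
      assume h: "i = 1 \<and> node_at b v' = Some s"
      then obtain x y where xy: "x @ map ((@) v') z @ y \<in> plang b" using Alt.IH(2) Alt.prems(2) by blast
      have "map ((#) 1) (x @ map ((@) v') z @ y) \<in> plang (Alt a b)"
        by (rule plang_AltI2[OF xy])
      moreover have "map ((#) 1) (x @ map ((@) v') z @ y)
          = map ((#) 1) x @ map ((@) v) z @ map ((#) 1) y"
        using h Cons by simp
      ultimately show ?thesis by metis
    qed
  qed
next
  case (Star a) show ?case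
  proof (cases v)
    case Nil thus ?thesis using Star.prems by (auto intro!: exI[of _ "[]"])
  next
    case (Cons i v')
    from Star.prems(1) Cons have h: "i = 0 \<and> node_at a v' = Some s"
      by (cases i; auto)
    then obtain x y where xy: "x @ map ((@) v') z @ y \<in> plang a" using Star.IH Star.prems(2) by blast
    have "map ((#) 0) (x @ map ((@) v') z @ y) \<in> map ((#) 0) ` plang a" using xy by (rule imageI)
    then have "concat [map ((#) 0) (x @ map ((@) v') z @ y)] \<in> plang (Star a)"
      by (intro plang_StarI) simp
    moreover have "concat [map ((#) 0) (x @ map ((@) v') z @ y)]
        = map ((#) 0) x @ map ((@) v) z @ map ((#) 0) y"
      using h Cons by simp
    ultimately show ?thesis by metis
  qed
qed

lemma cat_sound:
  assumes "node_at r v = Some (Cat s t)" "x \<in> lasts s" "y \<in> firsts t"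
  shows "\<exists>u w. u @ [v @ 0 # x, v @ 1 # y] @ w \<in> plang r"
proof -
  obtain zs where zs: "zs \<in> plang s" "zs \<noteq> []" "x = List.last zs" using assms(2) by (rule lastsE)
  obtain zt where zt: "zt \<in> plang t" "zt \<noteq> []" "y = hd zt" using assms(3) by (rule firstsE)
  obtain zs' where zs': "zs = zs' @ [x]" using zs by (metis append_butlast_last_id)
  obtain zt' where zt': "zt = y # zt'" using zt by (cases zt) auto
  obtain X Y where XY: "X @ map ((@) v) (map ((#) 0) zs @ map ((#) 1) zt) @ Y \<in> plang r"
    using context_word[OF assms(1) plang_CatI[OF zs(1) zt(1)]] by blast
  have "X @ map ((@) v) (map ((#) 0) zs @ map ((#) 1) zt) @ Y
      = (X @ map ((@) v) (map ((#) 0) zs')) @ [v @ 0 # x, v @ 1 # y] @ (map ((@) v) (map ((#) 1) zt') @ Y)"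
    by (simp add: zs' zt')
  then show ?thesis using XY by metis
qed

lemma star_sound:
  assumes "node_at r v = Some (Star s)" "x \<in> lasts (Star s)" "y \<in> firsts (Star s)"
  shows "\<exists>u w. u @ [v @ x, v @ y] @ w \<in> plang r"
proof -
  obtain zs where zs: "zs \<in> plang (Star s)" "zs \<noteq> []" "x = List.last zs" using assms(2) by (rule lastsE)
  obtain zt where zt: "zt \<in> plang (Star s)" "zt \<noteq> []" "y = hd zt" using assms(3) by (rule firstsE)
  obtain ws1 where ws1: "\<forall>z\<in>set ws1. z \<in> map ((#) 0) ` plang s" "zs = concat ws1" using zs(1) by (rule plang_StarE)
  obtain ws2 where ws2: "\<forall>z\<in>set ws2. z \<in> map ((#) 0) ` plang s" "zt = concat ws2" using zt(1) by (rule plang_StarE)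
  have "concat (ws1 @ ws2) \<in> plang (Star s)" by (rule plang_StarI) (use ws1 ws2 in auto)
  then have w: "zs @ zt \<in> plang (Star s)" using ws1 ws2 by simp
  obtain zs' where zs': "zs = zs' @ [x]" using zs by (metis append_butlast_last_id)
  obtain zt' where zt': "zt = y # zt'" using zt by (cases zt) auto
  obtain X Y where XY: "X @ map ((@) v) (zs @ zt) @ Y \<in> plang r"
    using context_word[OF assms(1) w] by blast
  have "X @ map ((@) v) (zs @ zt) @ Y
      = (X @ map ((@) v) zs') @ [v @ x, v @ y] @ (map ((@) v) zt' @ Y)"
    by (simp add: zs' zt')
  then show ?thesis using XY by metis
qed


lemma split_pair:
  assumes "u @ [p, q] @ w = A @ B"
  shows "(\<exists>u' w'. A = u' @ [p, q] @ w') \<or> (\<exists>u' w'. B = u' @ [p, q] @ w')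
         \<or> (A \<noteq> [] \<and> B \<noteq> [] \<and> List.last A = p \<and> hd B = q)"
proof -
  from assms have "u @ ([p, q] @ w) = A @ B" by simp
  then obtain us where "(u = A @ us \<and> us @ ([p, q] @ w) = B) \<or> (u @ us = A \<and> [p, q] @ w = us @ B)"
    unfolding append_eq_append_conv2 by blast
  then show ?thesis
  proof
    assume "u = A @ us \<and> us @ ([p, q] @ w) = B"
    then show ?thesis by auto
  next
    assume h: "u @ us = A \<and> [p, q] @ w = us @ B"
    show ?thesis
    proof (cases us)
      case Nil then show ?thesis using h by (metis append_Nil self_append_conv2)
    next
      case (Cons c us1)
      show ?thesis
      proof (cases us1)
        case Nil then show ?thesis using h Cons by auto
      next
        case (Cons d us2)
        then have "A = u @ [p, q] @ us2" using h \<open>us = c # us1\<close> by auto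
        then show ?thesis by blast
      qed
    qed
  qed
qed

lemma map_pair:
  assumes "map f x = u @ [p, q] @ w"
  shows "\<exists>u' w' p' q'. x = u' @ [p', q'] @ w' \<and> p = f p' \<and> q = f q'"
proof -
  from assms obtain us vs where 1: "x = us @ vs" "map f vs = p # q # w"
    unfolding map_eq_append_conv by auto
  from 1(2) obtain p' vs' where 2: "vs = p' # vs'" "f p' = p" "map f vs' = q # w"
    unfolding map_eq_Cons_conv by blast
  from 2(3) obtain q' vs'' where 3: "vs' = q' # vs''" "f q' = q"
    unfolding map_eq_Cons_conv by blast
  show ?thesis using 1 2 3 by auto
qed

definition catF :: "'a re \<Rightarrow> nat list \<Rightarrow> nat list \<Rightarrow> bool" where
  "catF r p q \<longleftrightarrow> (\<exists>v s t x y. node_at r v = Some (Cat s t) \<and> x \<in> lasts s \<and> y \<in> firsts t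
      \<and> p = v @ 0 # x \<and> q = v @ 1 # y)"
definition starF :: "'a re \<Rightarrow> nat list \<Rightarrow> nat list \<Rightarrow> bool" where
  "starF r p q \<longleftrightarrow> (\<exists>v s x y. node_at r v = Some (Star s) \<and> x \<in> lasts (Star s) \<and> y \<in> firsts (Star s)
      \<and> p = v @ x \<and> q = v @ y)"

lemma lift_F:
  assumes "\<And>v. node_at r (i # v) = node_at a v" "catF a p q \<or> starF a p q"
  shows "catF r (i # p) (i # q) \<or> starF r (i # p) (i # q)"
  using assms(2)
proof
  assume "catF a p q"
  then obtain v s t x y where "node_at a v = Some (Cat s t)" "x \<in> lasts s" "y \<in> firsts t"
      "p = v @ 0 # x" "q = v @ 1 # y" unfolding catF_def by blast
  then have "catF r (i # p) (i # q)" unfolding catF_def using assms(1)[of v]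
    by (intro exI[of _ "i # v"]) auto
  then show ?thesis by blast
next
  assume "starF a p q"
  then obtain v s x y where "node_at a v = Some (Star s)" "x \<in> lasts (Star s)" "y \<in> firsts (Star s)"
      "p = v @ x" "q = v @ y" unfolding starF_def by blast
  then have "starF r (i # p) (i # q)" unfolding starF_def using assms(1)[of v]
    by (intro exI[of _ "i # v"]) auto
  then show ?thesis by blast
qed

lemma star_inner:
  assumes IH: "\<And>u w p q. u @ [p, q] @ w \<in> plang a \<Longrightarrow> catF a p q \<or> starF a p q"
  shows "(\<forall>z\<in>set ws. z \<in> map ((#) 0) ` plang a) \<Longrightarrow> u @ [p, q] @ w = concat ws
     \<Longrightarrow> catF (Star a) p q \<or> starF (Star a) p q"
proof (induction ws arbitrary: u w)
  case Nil thus ?case by simp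
next
  case (Cons z ws)
  obtain x where x: "z = map ((#) 0) x" "x \<in> plang a" using Cons.prems(1) by auto
  have "u @ [p, q] @ w = z @ concat ws" using Cons.prems(2) by simp
  from split_pair[OF this] show ?case
  proof (elim disjE exE conjE)
    fix u' w' assume "z = u' @ [p, q] @ w'"
    then have "map ((#) 0) x = u' @ [p, q] @ w'" using x(1) by simp
    from map_pair[OF this] obtain u'' w'' p' q' where "x = u'' @ [p', q'] @ w''" "p = 0 # p'" "q = 0 # q'"
      by blast
    then show ?thesis using lift_F[of "Star a" 0 a p' q'] IH x(2) by auto
  next
    fix u' w' assume "concat ws = u' @ [p, q] @ w'"
    then show ?thesis using Cons.IH Cons.prems(1) by auto
  next
    assume h: "z \<noteq> []" "concat ws \<noteq> []" "List.last z = p" "hd (concat ws) = q"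
    have "z \<in> map ((#) 0) ` plang a" using Cons.prems(1) by simp
    then have "concat [z] \<in> plang (Star a)" by (intro plang_StarI) simp
    then have "p \<in> lasts (Star a)" using lastsI[of z "Star a"] h by simp
    moreover have "concat ws \<in> plang (Star a)" by (rule plang_StarI) (use Cons.prems(1) in simp)
    then have "q \<in> firsts (Star a)" using firstsI[of "concat ws" "Star a"] h by simp
    ultimately have "starF (Star a) p q" unfolding starF_def
      by (intro exI[of _ "[]"]) auto
    then show ?thesis by blast
  qed
qed

lemma follow_complete:
  "u @ [p, q] @ w \<in> plang r \<Longrightarrow> catF r p q \<or> starF r p q"
proof (induction r arbitrary: u w p q)
  case Eps thus ?case by simp
next
  case (Chr c) thus ?case by simp
next
  case (Cat a b)
  obtain x y where xy: "x \<in> plang a" "y \<in> plang b" "u @ [p, q] @ w = map ((#) 0) x @ map ((#) 1) y"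
    using Cat.prems by (rule plang_CatE)
  from split_pair[OF xy(3)] show ?case
  proof (elim disjE exE conjE)
    fix u' w' assume "map ((#) 0) x = u' @ [p, q] @ w'"
    from map_pair[OF this] obtain u'' w'' p' q' where "x = u'' @ [p', q'] @ w''" "p = 0 # p'" "q = 0 # q'"
      by blast
    then show ?thesis using lift_F[of "Cat a b" 0 a p' q'] Cat.IH(1) xy(1) by auto
  next
    fix u' w' assume "map ((#) 1) y = u' @ [p, q] @ w'"
    from map_pair[OF this] obtain u'' w'' p' q' where "y = u'' @ [p', q'] @ w''" "p = 1 # p'" "q = 1 # q'"
      by blast
    then show ?thesis using lift_F[of "Cat a b" 1 b p' q'] Cat.IH(2) xy(2) by auto
  next
    assume h: "map ((#) 0) x \<noteq> []" "map ((#) 1) y \<noteq> []" "List.last (map ((#) 0) x) = p"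
      "hd (map ((#) 1) y) = q"
    then have "x \<noteq> []" "y \<noteq> []" by auto
    then have "List.last x \<in> lasts a" "hd y \<in> firsts b" "p = [] @ 0 # List.last x" "q = [] @ 1 # hd y"
      using h xy by (auto intro: lastsI firstsI simp: last_map hd_map)
    then have "catF (Cat a b) p q" unfolding catF_def
      by (intro exI[of _ "[]"] exI[of _ a] exI[of _ b] exI[of _ "List.last x"] exI[of _ "hd y"]) simp
    then show ?thesis by blast
  qed
next
  case (Alt a b)
  from Alt.prems have "(\<exists>x. x \<in> plang a \<and> u @ [p, q] @ w = map ((#) 0) x) \<or>
      (\<exists>x. x \<in> plang b \<and> u @ [p, q] @ w = map ((#) 1) x)" by auto
  then show ?case
  proof (elim disjE exE conjE)
    fix x assume "x \<in> plang a" "u @ [p, q] @ w = map ((#) 0) x"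
    moreover from map_pair[OF sym[OF this(2)]] obtain u'' w'' p' q' where "x = u'' @ [p', q'] @ w''" "p = 0 # p'" "q = 0 # q'"
      by blast
    ultimately show ?thesis using lift_F[of "Alt a b" 0 a p' q'] Alt.IH(1) by auto
  next
    fix x assume "x \<in> plang b" "u @ [p, q] @ w = map ((#) 1) x"
    moreover from map_pair[OF sym[OF this(2)]] obtain u'' w'' p' q' where "x = u'' @ [p', q'] @ w''" "p = 1 # p'" "q = 1 # q'"
      by blast
    ultimately show ?thesis using lift_F[of "Alt a b" 1 b p' q'] Alt.IH(2) by auto
  qed
next
  case (Star a)
  obtain ws where "\<forall>z\<in>set ws. z \<in> map ((#) 0) ` plang a" "u @ [p, q] @ w = concat ws"
    using Star.prems by (rule plang_StarE)
  then show ?case using star_inner[of a ws u p q w] Star.IH by blast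
qed


lemma first_iff: "x \<in> first R v \<longleftrightarrow> (\<exists>s y. node_at R v = Some s \<and> y \<in> firsts s \<and> x = v @ y)"
  unfolding first_def firsts_def by blast
lemma last_iff: "x \<in> Defs.last R v \<longleftrightarrow> (\<exists>s y. node_at R v = Some s \<and> y \<in> lasts s \<and> x = v @ y)"
  unfolding last_def lasts_def by blast

lemma first_node: "x \<in> first R v \<Longrightarrow> v \<in> nodes R \<and> prefix v x"
  unfolding first_iff nodes_def by auto
lemma last_node: "x \<in> Defs.last R v \<Longrightarrow> v \<in> nodes R \<and> prefix v x"
  unfolding last_iff nodes_def by auto

lemma follow_char:
  "q \<in> follow R p \<longleftrightarrow> (\<exists>v. is_cat R v \<and> p \<in> Defs.last R (left v) \<and> q \<in> first R (right v))
     \<or> (\<exists>v. is_star R v \<and> p \<in> Defs.last R v \<and> q \<in> first R v)"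
proof
  assume "q \<in> follow R p"
  then obtain u w where "u @ [p, q] @ w \<in> plang R" unfolding follow_def by auto
  from follow_complete[OF this] show "(\<exists>v. is_cat R v \<and> p \<in> Defs.last R (left v) \<and> q \<in> first R (right v))
     \<or> (\<exists>v. is_star R v \<and> p \<in> Defs.last R v \<and> q \<in> first R v)"
  proof
    assume "catF R p q"
    then obtain v s t x y where h: "node_at R v = Some (Cat s t)" "x \<in> lasts s" "y \<in> firsts t"
      "p = v @ 0 # x" "q = v @ 1 # y" unfolding catF_def by blast
    have "node_at R (v @ [0]) = Some s" "node_at R (v @ [1]) = Some t"
      using h(1) by (simp_all add: node_at_append)
    then have "is_cat R v" "p \<in> Defs.last R (left v)" "q \<in> first R (right v)"
      using h unfolding is_cat_def last_iff first_iff left_def right_def by auto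
    then show ?thesis by blast
  next
    assume "starF R p q"
    then obtain v s x y where h: "node_at R v = Some (Star s)" "x \<in> lasts (Star s)" "y \<in> firsts (Star s)"
      "p = v @ x" "q = v @ y" unfolding starF_def by blast
    then have "is_star R v" "p \<in> Defs.last R v" "q \<in> first R v"
      unfolding is_star_def last_iff first_iff by auto
    then show ?thesis by blast
  qed
next
  assume "(\<exists>v. is_cat R v \<and> p \<in> Defs.last R (left v) \<and> q \<in> first R (right v))
     \<or> (\<exists>v. is_star R v \<and> p \<in> Defs.last R v \<and> q \<in> first R v)"
  then show "q \<in> follow R p"
  proof (elim disjE exE conjE)
    fix v assume h: "is_cat R v" "p \<in> Defs.last R (left v)" "q \<in> first R (right v)"
    then obtain s t where st: "node_at R v = Some (Cat s t)" unfolding is_cat_def by blast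
    then have "node_at R (v @ [0]) = Some s" "node_at R (v @ [1]) = Some t"
      by (simp_all add: node_at_append)
    then obtain x y where "x \<in> lasts s" "y \<in> firsts t" "p = v @ 0 # x" "q = v @ 1 # y"
      using h unfolding last_iff first_iff left_def right_def by auto
    then show ?thesis using cat_sound[OF st] unfolding follow_def by blast
  next
    fix v assume h: "is_star R v" "p \<in> Defs.last R v" "q \<in> first R v"
    then obtain s where st: "node_at R v = Some (Star s)" unfolding is_star_def by blast
    then obtain x y where "x \<in> lasts (Star s)" "y \<in> firsts (Star s)" "p = v @ x" "q = v @ y"
      using h unfolding last_iff first_iff by auto
    then show ?thesis using star_sound[OF st] unfolding follow_def by blast
  qed
qed

lemma first_down_R:
  assumes "p \<in> first R w" "prefix w v" "prefix v p"
  shows "p \<in> first R v"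
proof -
  obtain s y where sy: "node_at R w = Some s" "y \<in> firsts s" "p = w @ y" using assms(1) unfolding first_iff by blast
  obtain v' where v': "v = w @ v'" using assms(2) by (auto simp: prefix_def)
  obtain x where x: "p = v @ x" using assms(3) by (auto simp: prefix_def)
  have "y = v' @ x" using sy(3) x v' by simp
  then obtain s' where "node_at s v' = Some s'" "x \<in> firsts s'" using firsts_down sy(2) by blast
  then show ?thesis unfolding first_iff using sy(1) v' x by (auto simp: node_at_append)
qed

lemma last_down_R:
  assumes "p \<in> Defs.last R w" "prefix w v" "prefix v p"
  shows "p \<in> Defs.last R v"
proof -
  obtain s y where sy: "node_at R w = Some s" "y \<in> lasts s" "p = w @ y" using assms(1) unfolding last_iff by blast
  obtain v' where v': "v = w @ v'" using assms(2) by (auto simp: prefix_def)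
  obtain x where x: "p = v @ x" using assms(3) by (auto simp: prefix_def)
  have "y = v' @ x" using sy(3) x v' by simp
  then obtain s' where "node_at s v' = Some s'" "x \<in> lasts s'" using lasts_down sy(2) by blast
  then show ?thesis unfolding last_iff using sy(1) v' x by (auto simp: node_at_append)
qed

lemma first_sub_R:
  assumes "prefix w v" "x \<in> first R w" "x \<in> first R v"
  shows "first R v \<subseteq> first R w"
proof
  fix x2 assume x2: "x2 \<in> first R v"
  obtain s y where sy: "node_at R w = Some s" "y \<in> firsts s" "x = w @ y" using assms(2) unfolding first_iff by blast
  obtain v' where v': "v = w @ v'" using assms(1) by (auto simp: prefix_def)
  obtain s' z where sz: "node_at R v = Some s'" "z \<in> firsts s'" "x = v @ z" using assms(3) unfolding first_iff by blast
  have ns: "node_at s v' = Some s'" using sz(1) sy(1) v' by (simp add: node_at_append)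
  have "y = v' @ z" using sy(3) sz(3) v' by simp
  obtain z2 where z2: "z2 \<in> firsts s'" "x2 = v @ z2" using x2 sz(1) unfolding first_iff by auto
  have "v' @ z2 \<in> firsts s" using firsts_up[OF ns _ z2(1)] sy(2) \<open>y = v' @ z\<close> by blast
  then show "x2 \<in> first R w" unfolding first_iff using sy(1) z2(2) v' by auto
qed

lemma lcp_prefix1: "prefix (lcp p q) p"
  by (induction p q rule: lcp.induct) auto
lemma lcp_prefix2: "prefix (lcp p q) q"
  by (induction p q rule: lcp.induct) auto
lemma lcp_greatest: "prefix w p \<Longrightarrow> prefix w q \<Longrightarrow> prefix w (lcp p q)"
proof (induction p q arbitrary: w rule: lcp.induct)
  case (1 x xs y ys) thus ?case by (cases w) auto
qed auto

lemma pstar_self: "is_star R v \<Longrightarrow> pstar R v = {v}"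
  unfolding pstar_def by (auto intro: prefix_order.antisym)

lemma pstar_exists:
  assumes "is_star R w" "prefix w l"
  shows "\<exists>v. v \<in> pstar R l \<and> prefix w v"
proof -
  let ?P = "\<lambda>k. \<exists>u. prefix u l \<and> is_star R u \<and> prefix w u \<and> length u = k"
  have "?P (length w)" using assms by blast
  moreover have "\<forall>y. ?P y \<longrightarrow> y \<le> length l" by (auto dest: prefix_length_le)
  ultimately obtain k where k: "?P k" "\<forall>y. ?P y \<longrightarrow> y \<le> k" using Nat.ex_has_greatest_nat[of ?P] by blast
  then obtain m where m: "prefix m l" "is_star R m" "prefix w m" "length m = k" by blast
  have "prefix u m" if u: "prefix u l" "is_star R u" for u
  proof -
    have "length u \<le> length m"
    proof (cases "prefix w u")
      case True then show ?thesis using k(2) u m(4) by blast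
    next
      case False
      then have "prefix u w" using prefix_same_cases[OF u(1) assms(2)] by blast
      then show ?thesis using m(3) by (auto dest!: prefix_length_le)
    qed
    then show ?thesis using prefix_length_prefix[OF u(1) m(1)] by blast
  qed
  then have "m \<in> pstar R l" unfolding pstar_def using m by blast
  then show ?thesis using m(3) by blast
qed

lemma min_exists:
  assumes D1: "\<And>v u. D v u \<Longrightarrow> length u < length v"
    and D2: "\<And>a b c. D a b \<Longrightarrow> D b c \<Longrightarrow> D a c"
    and "(v::nat list) \<in> N"
  shows "\<exists>u. u \<in> N \<and> \<not> (\<exists>y\<in>N. D u y) \<and> (u = v \<or> D v u)"
  using assms(3)
proof (induction "length v" arbitrary: v rule: less_induct)
  case less
  show ?case
  proof (cases "\<exists>y\<in>N. D v y")
    case False thus ?thesis using less.prems by blast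
  next
    case True
    then obtain y where y: "y \<in> N" "D v y" by blast
    then obtain u where "u \<in> N" "\<not> (\<exists>y\<in>N. D u y)" "u = y \<or> D y u"
      using less.hyps[OF D1[OF y(2)] y(1)] by blast
    then show ?thesis using y D2 by blast
  qed
qed

lemma cat_dom_trans: "cat_dominated R a b \<Longrightarrow> cat_dominated R b c \<Longrightarrow> cat_dominated R a c"
  unfolding cat_dominated_def by (meson order_trans prefix_order.less_trans)
lemma star_dom_trans: "star_dominated R a b \<Longrightarrow> star_dominated R b c \<Longrightarrow> star_dominated R a c"
  unfolding star_dominated_def by (meson order_trans prefix_order.less_trans)
lemma cat_dom_len: "cat_dominated R v u \<Longrightarrow> length u < length v"
  unfolding cat_dominated_def by (simp add: prefix_length_less)
lemma star_dom_len: "star_dominated R v u \<Longrightarrow> length u < length v"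
  unfolding star_dominated_def by (simp add: prefix_length_less)


lemma firstextent_single: "v \<in> firstextent R {q} \<longleftrightarrow> q \<in> first R v"
  unfolding firstextent_def using first_node by blast
lemma firstextent_iff: "v \<in> firstextent R X \<longleftrightarrow> (\<exists>q\<in>X. q \<in> first R v)"
  unfolding firstextent_def using first_node by blast
lemma lastextent_iff: "v \<in> lastextent R X \<longleftrightarrow> (\<exists>q\<in>X. q \<in> Defs.last R v)"
  unfolding lastextent_def using last_node by blast

lemma delta_cat_iff: "q \<in> delta_cat R v a \<longleftrightarrow> q \<in> Pos_chr R a \<and> q \<in> first R (right v)"
  unfolding delta_cat_def firstextent_single by blast

lemma delta_star_iff: "is_star R v \<Longrightarrow> q \<in> delta_star R v a \<longleftrightarrow> q \<in> Pos_chr R a \<and> q \<in> first R v"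
  unfolding delta_star_def firstextent_single by (simp add: pstar_self)

lemma Ncat_iff: "v \<in> Ncat R P a \<longleftrightarrow> is_cat R v \<and> (\<exists>p\<in>P. p \<in> Defs.last R (left v)) \<and> (\<exists>q\<in>Pos_chr R a. q \<in> first R (right v))"
  unfolding Ncat_def firstextent_iff lastextent_iff by blast

lemma Nstar_iff: "v \<in> Nstar R P a \<longleftrightarrow> is_star R v \<and> v \<in> pstar_set R (lca_set P (Pos_chr R a)) \<and>
   (\<exists>p\<in>P. p \<in> Defs.last R v) \<and> (\<exists>q\<in>Pos_chr R a. q \<in> first R v)"
  unfolding Nstar_def firstextent_iff lastextent_iff by blast

lemma NcatI: "is_cat R v \<Longrightarrow> p \<in> P \<Longrightarrow> p \<in> Defs.last R (left v) \<Longrightarrow> q \<in> Pos_chr R a \<Longrightarrow> q \<in> first R (right v) \<Longrightarrow> v \<in> Ncat R P a"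
  unfolding Ncat_iff by blast
lemma NcatD: "v \<in> Ncat R P a \<Longrightarrow> is_cat R v \<and> (\<exists>p\<in>P. p \<in> Defs.last R (left v)) \<and> (\<exists>q\<in>Pos_chr R a. q \<in> first R (right v))"
  unfolding Ncat_iff by blast
lemma NstarI: "is_star R v \<Longrightarrow> v \<in> pstar_set R (lca_set P (Pos_chr R a)) \<Longrightarrow> p \<in> P \<Longrightarrow> p \<in> Defs.last R v \<Longrightarrow> q \<in> Pos_chr R a \<Longrightarrow> q \<in> first R v \<Longrightarrow> v \<in> Nstar R P a"
  unfolding Nstar_iff by blast
lemma NstarD: "v \<in> Nstar R P a \<Longrightarrow> is_star R v \<and> (\<exists>p\<in>P. p \<in> Defs.last R v) \<and> (\<exists>q\<in>Pos_chr R a. q \<in> first R v)"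
  unfolding Nstar_iff by blast
lemma Ncat_minD: "v \<in> Ncat_min R P a \<Longrightarrow> v \<in> Ncat R P a" unfolding Ncat_min_def by blast
lemma Nstar_minD: "v \<in> Nstar_min R P a \<Longrightarrow> v \<in> Nstar R P a" unfolding Nstar_min_def by blast
lemma Ncat_min_nodom: "v \<in> Ncat_min R P a \<Longrightarrow> u \<in> Ncat R P a \<Longrightarrow> \<not> cat_dominated R v u" unfolding Ncat_min_def by blast
lemma Nstar_min_nodom: "v \<in> Nstar_min R P a \<Longrightarrow> u \<in> Nstar R P a \<Longrightarrow> \<not> star_dominated R v u" unfolding Nstar_min_def by blast

lemma Ncat_min_ex: "v \<in> Ncat R P a \<Longrightarrow> \<exists>u. u \<in> Ncat_min R P a \<and> (u = v \<or> cat_dominated R v u)"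
  using min_exists[of "cat_dominated R" v "Ncat R P a"] cat_dom_len cat_dom_trans
  unfolding Ncat_min_def by blast

lemma Nstar_min_ex: "v \<in> Nstar R P a \<Longrightarrow> \<exists>u. u \<in> Nstar_min R P a \<and> (u = v \<or> star_dominated R v u)"
  using min_exists[of "star_dominated R" v "Nstar R P a"] star_dom_len star_dom_trans
  unfolding Nstar_min_def by blast

lemma same_len_prefix: "prefix u q \<Longrightarrow> prefix v q \<Longrightarrow> length u = length v \<Longrightarrow> u = v"
proof -
  assume a: "prefix u q" "prefix v q" "length u = length v"
  have "prefix u v" using prefix_length_prefix[OF a(1) a(2)] a(3) by simp
  moreover have "prefix v u" using prefix_length_prefix[OF a(2) a(1)] a(3) by simp
  ultimately show "u = v" by (rule prefix_order.antisym)
qed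

theorem lemma3:
  fixes R :: "'a re" and P :: "nat list set" and a :: 'a
  assumes "P \<subseteq> Pos R"
  shows "delta R P a = (\<Union>v\<in>Ncat_min R P a. delta_cat R v a) \<union> (\<Union>v\<in>Nstar_min R P a. delta_star R v a)
    \<and> (\<forall>u\<in>Ncat_min R P a. \<forall>v\<in>Ncat_min R P a. u \<noteq> v \<longrightarrow> delta_cat R u a \<inter> delta_cat R v a = {})
    \<and> (\<forall>u\<in>Nstar_min R P a. \<forall>v\<in>Nstar_min R P a. u \<noteq> v \<longrightarrow> delta_star R u a \<inter> delta_star R v a = {})
    \<and> (\<forall>v\<in>Ncat_min R P a. delta_cat R v a \<noteq> {})
    \<and> (\<forall>v\<in>Nstar_min R P a. delta_star R v a \<noteq> {})"
proof (intro conjI)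
  let ?Pa = "Pos_chr R a"
  show "delta R P a = (\<Union>v\<in>Ncat_min R P a. delta_cat R v a) \<union> (\<Union>v\<in>Nstar_min R P a. delta_star R v a)"
  proof (intro equalityI subsetI)
    fix q assume "q \<in> delta R P a"
    then obtain p where q: "q \<in> ?Pa" "p \<in> P" "q \<in> follow R p" unfolding delta_def by blast
    from q(3)[unfolded follow_char]
    show "q \<in> (\<Union>v\<in>Ncat_min R P a. delta_cat R v a) \<union> (\<Union>v\<in>Nstar_min R P a. delta_star R v a)"
    proof (elim disjE exE conjE)
      fix v assume h: "is_cat R v" "p \<in> Defs.last R (left v)" "q \<in> first R (right v)"
      have "v \<in> Ncat R P a" using NcatI[OF h(1) q(2) h(2) q(1) h(3)] .
      from Ncat_min_ex[OF this] obtain u where u: "u \<in> Ncat_min R P a" "u = v \<or> cat_dominated R v u" by blast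
      have "q \<in> first R (right u)" using u(2) h(3) unfolding cat_dominated_def by auto
      then have "q \<in> delta_cat R u a" unfolding delta_cat_iff using q by blast
      then show ?thesis using u(1) by blast
    next
      fix w assume h: "is_star R w" "p \<in> Defs.last R w" "q \<in> first R w"
      define l where "l = lcp p q"
      have "prefix w l" unfolding l_def using last_node[OF h(2)] first_node[OF h(3)] lcp_greatest by blast
      then obtain v where v: "v \<in> pstar R l" "prefix w v" using pstar_exists h(1) by blast
      then have vl: "prefix v l" "is_star R v" unfolding pstar_def by auto
      have pl: "prefix l p" "prefix l q" unfolding l_def by (rule lcp_prefix1, rule lcp_prefix2)
      have pv: "p \<in> Defs.last R v" using last_down_R[OF h(2) v(2)] vl(1) pl(1) by (meson prefix_order.trans)
      have qv: "q \<in> first R v" using first_down_R[OF h(3) v(2)] vl(1) pl(2) by (meson prefix_order.trans)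
      have "l \<in> lca_set P ?Pa" unfolding lca_set_def l_def using q by blast
      then have "v \<in> pstar_set R (lca_set P ?Pa)" unfolding pstar_set_def using v(1) by blast
      then have "v \<in> Nstar R P a" using NstarI[OF vl(2) _ q(2) pv q(1) qv] by blast
      from Nstar_min_ex[OF this] obtain u where u: "u \<in> Nstar_min R P a" "u = v \<or> star_dominated R v u" by blast
      have fq: "q \<in> first R u" using u(2) qv unfolding star_dominated_def by auto
      have st: "is_star R u" using NstarD[OF Nstar_minD[OF u(1)]] by blast
      have "q \<in> delta_star R u a" unfolding delta_star_iff[OF st] using q(1) fq by blast
      then show ?thesis using u(1) by blast
    qed
  next
    fix q assume "q \<in> (\<Union>v\<in>Ncat_min R P a. delta_cat R v a) \<union> (\<Union>v\<in>Nstar_min R P a. delta_star R v a)"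
    then show "q \<in> delta R P a"
    proof (elim UnE UN_E)
      fix v assume v: "v \<in> Ncat_min R P a" "q \<in> delta_cat R v a"
      then obtain p where "is_cat R v" "p \<in> P" "p \<in> Defs.last R (left v)"
        using NcatD[OF Ncat_minD[OF v(1)]] by blast
      moreover have "q \<in> ?Pa" "q \<in> first R (right v)" using v(2) unfolding delta_cat_iff by auto
      ultimately show ?thesis unfolding delta_def follow_char by blast
    next
      fix v assume v: "v \<in> Nstar_min R P a" "q \<in> delta_star R v a"
      then obtain p where st: "is_star R v" "p \<in> P" "p \<in> Defs.last R v"
        using NstarD[OF Nstar_minD[OF v(1)]] by blast
      moreover have "q \<in> ?Pa" "q \<in> first R v" using v(2) delta_star_iff[OF st(1)] by auto
      ultimately show ?thesis unfolding delta_def follow_char by blast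
    qed
  qed
next
  show "\<forall>u\<in>Ncat_min R P a. \<forall>v\<in>Ncat_min R P a. u \<noteq> v \<longrightarrow> delta_cat R u a \<inter> delta_cat R v a = {}"
  proof (intro ballI impI equalityI subsetI)
    fix u v q assume uv: "u \<in> Ncat_min R P a" "v \<in> Ncat_min R P a" "u \<noteq> v" "q \<in> delta_cat R u a \<inter> delta_cat R v a"
    have qu: "q \<in> first R (right u)" using uv(4) delta_cat_iff[of q R u a] by blast
    have qv: "q \<in> first R (right v)" using uv(4) delta_cat_iff[of q R v a] by blast
    have key: "cat_dominated R y x" if "length x < length y" "q \<in> first R (right x)" "q \<in> first R (right y)" for x y
    proof -
      have 1: "prefix (x @ [1]) q" "prefix (y @ [1]) q" using that(2,3) first_node unfolding right_def by blast+
      then have "prefix y q" by (meson prefix_order.trans prefixI)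
      then have 2: "prefix (x @ [1]) y" using prefix_length_prefix[OF 1(1)] that(1) by simp
      then have "strict_prefix x y" by (metis prefix_order.less_le_trans prefix_order.less_le prefixI
          append_self_conv not_Cons_self2)
      moreover have "prefix (right x) (right y)" unfolding right_def using 2 by (metis prefix_order.trans prefixI)
      then have "first R (right y) \<subseteq> first R (right x)" using first_sub_R that(2,3) by blast
      ultimately show ?thesis unfolding cat_dominated_def by blast
    qed
    have lneq: "length u \<noteq> length v"
    proof
      assume "length u = length v"
      moreover have "prefix (u @ [1]) q" "prefix (v @ [1]) q" using qu qv first_node unfolding right_def by blast+
      ultimately have "u @ [1] = v @ [1]" using same_len_prefix by fastforce
      then show False using uv(3) by simp
    qed
    have "u \<in> Ncat R P a" "v \<in> Ncat R P a" using uv Ncat_minD by auto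
    show "q \<in> {}"
    proof (cases "length u < length v")
      case True
      then show ?thesis using key[OF True qu qv] Ncat_min_nodom[OF uv(2) \<open>u \<in> Ncat R P a\<close>] by blast
    next
      case False
      then have "length v < length u" using lneq by simp
      then show ?thesis using key[OF _ qv qu] Ncat_min_nodom[OF uv(1) \<open>v \<in> Ncat R P a\<close>] by blast
    qed
  qed simp
next
  show "\<forall>u\<in>Nstar_min R P a. \<forall>v\<in>Nstar_min R P a. u \<noteq> v \<longrightarrow> delta_star R u a \<inter> delta_star R v a = {}"
  proof (intro ballI impI equalityI subsetI)
    fix u v q assume uv: "u \<in> Nstar_min R P a" "v \<in> Nstar_min R P a" "u \<noteq> v" "q \<in> delta_star R u a \<inter> delta_star R v a"
    have su: "is_star R u" "is_star R v" using NstarD[OF Nstar_minD[OF uv(1)]] NstarD[OF Nstar_minD[OF uv(2)]] by auto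
    have qu: "q \<in> first R u" using uv(4) delta_star_iff[OF su(1)] by blast
    have qv: "q \<in> first R v" using uv(4) delta_star_iff[OF su(2)] by blast
    have key: "star_dominated R y x" if "length x < length y" "q \<in> first R x" "q \<in> first R y" for x y
    proof -
      have 1: "prefix x q" "prefix y q" using that(2,3) first_node by blast+
      then have 2: "prefix x y" using prefix_length_prefix that(1) by fastforce
      then have "strict_prefix x y" using that(1) by (auto simp: strict_prefix_def)
      moreover have "first R y \<subseteq> first R x" using first_sub_R 2 that(2,3) by blast
      ultimately show ?thesis unfolding star_dominated_def by blast
    qed
    have lneq: "length u \<noteq> length v"
      using same_len_prefix first_node qu qv uv(3) by blast
    have "u \<in> Nstar R P a" "v \<in> Nstar R P a" using uv Nstar_minD by auto
    show "q \<in> {}"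
    proof (cases "length u < length v")
      case True
      then show ?thesis using key[OF True qu qv] Nstar_min_nodom[OF uv(2) \<open>u \<in> Nstar R P a\<close>] by blast
    next
      case False
      then have "length v < length u" using lneq by simp
      then show ?thesis using key[OF _ qv qu] Nstar_min_nodom[OF uv(1) \<open>v \<in> Nstar R P a\<close>] by blast
    qed
  qed simp
next
  show "\<forall>v\<in>Ncat_min R P a. delta_cat R v a \<noteq> {}"
  proof
    fix v assume "v \<in> Ncat_min R P a"
    from NcatD[OF Ncat_minD[OF this]] obtain q where "q \<in> Pos_chr R a" "q \<in> first R (right v)" by blast
    then have "q \<in> delta_cat R v a" using delta_cat_iff[of q R v a] by blast
    then show "delta_cat R v a \<noteq> {}" by blast
  qed
next
  show "\<forall>v\<in>Nstar_min R P a. delta_star R v a \<noteq> {}"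
  proof
    fix v assume "v \<in> Nstar_min R P a"
    from NstarD[OF Nstar_minD[OF this]] obtain q where "is_star R v" "q \<in> Pos_chr R a" "q \<in> first R v" by blast
    then have "q \<in> delta_star R v a" using delta_star_iff[of R v q a] by blast
    then show "delta_star R v a \<noteq> {}" by blast
  qed
qed

end
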